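(* Let $\Sigma=\{A,C,G,T\}$, let $\ell\ge 1$ and $M\ge 1$ be integers, and for every ordered pair $(b,a)\in\Sigma^2$ with $a\neq b$ fix integers $1\le t_{b\to a}^{(1)}<t_{b\to a}^{(2)}<\dots<t_{b\to a}^{(\ell)}\le M$. Let $G=(V,E,L)$ be the directed labeled graph with vertex set $V=\Sigma$ in which, for every $a,b\in\Sigma$ with $a\neq b$, there are $\ell$ parallel edges directed from $b$ to $a$, the $i$-th of which ($i\in\{1,\dots,\ell\}$) is labeled by the word $a^{t_{b\to a}^{(i)}}$ (the letter $a$ repeated $t_{b\to a}^{(i)}$ times); $G$ has no other edges. Then $G$ is lossless. Moreover, if $G'$ is the ordinary graph obtained from $G$ by replacing each edge $v\xrightarrow{w_1\cdots w_m}u$ ($w_j\in\Sigma$) with a path $v\xrightarrow{w_1}v_1\xrightarrow{w_2}\cdots\xrightarrow{w_{m-1}}v_{m-1}\xrightarrow{w_m}u$ through new auxiliary vertices $v_1,\dots,v_{m-1}$, then $\mathsf{cap}(S(G))=\log_2\lambda(A_{G'})$, where $A_{G'}$ is the adjacency matrix of $G'$ and $\lambda(A_{G'})$ its spectral radius.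
   Context: A finite directed labeled graph $G=(V,E,L)$ has a finite vertex set $V$, a finite multiset of directed edges $E$ (parallel edges allowed), and a labeling $L:E\to\Sigma^+$ of edges by nonempty words. A path $\gamma=e_1\cdots e_m$ generates the word $L(\gamma)=L(e_1)\cdots L(e_m)$ (the empty path generates the empty word). $G$ is ordinary if every edge label has length $1$. $G$ is lossless if for any vertices $v_1,v_2$ (possibly equal) and any word $w\in\Sigma^*$ there is at most one path from $v_1$ to $v_2$ generating $w$. The constrained system of $G$ is $S(G)=\{L(\gamma):\gamma\text{ a finite path in }G\}$, and its capacity is $\mathsf{cap}(S(G))=\limsup_{n\to\infty}\frac1n\log_2|S(G)\cap\Sigma^n|$. *)

theory Defs
  imports "Jordan_Normal_Form.Spectral_Radius" "HOL-Library.Extended_Real" "HOL-Library.Liminf_Limsup"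
begin

datatype dna = A | C | G | T

text \<open>Finite directed labeled graph; edges are identified by names (so parallel
edges are allowed), each with a source, a target and a label word.\<close>
record ('v, 'e, 'a) lgraph =
  verts :: "'v set"
  edges :: "'e set"
  src   :: "'e \<Rightarrow> 'v"
  tgt   :: "'e \<Rightarrow> 'v"
  lab   :: "'e \<Rightarrow> 'a list"

definition wf_lgraph :: "('v, 'e, 'a) lgraph \<Rightarrow> bool" where
  "wf_lgraph Gr \<longleftrightarrow> finite (verts Gr) \<and> finite (edges Gr) \<and>
     (\<forall>e\<in>edges Gr. src Gr e \<in> verts Gr \<and> tgt Gr e \<in> verts Gr \<and> lab Gr e \<noteq> [])"

definition is_path :: "('v, 'e, 'a) lgraph \<Rightarrow> 'v \<Rightarrow> 'v \<Rightarrow> 'e list \<Rightarrow> bool" where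
  "is_path Gr v1 v2 es \<longleftrightarrow> v1 \<in> verts Gr \<and> v2 \<in> verts Gr \<and> set es \<subseteq> edges Gr \<and>
     (if es = [] then v1 = v2
      else src Gr (hd es) = v1 \<and> tgt Gr (last es) = v2 \<and>
           (\<forall>i. Suc i < length es \<longrightarrow> tgt Gr (es ! i) = src Gr (es ! Suc i)))"

definition path_word :: "('v, 'e, 'a) lgraph \<Rightarrow> 'e list \<Rightarrow> 'a list" where
  "path_word Gr es = concat (map (lab Gr) es)"

definition ordinary :: "('v, 'e, 'a) lgraph \<Rightarrow> bool" where
  "ordinary Gr \<longleftrightarrow> (\<forall>e\<in>edges Gr. length (lab Gr e) = 1)"

definition lossless :: "('v, 'e, 'a) lgraph \<Rightarrow> bool" where
  "lossless Gr \<longleftrightarrow> (\<forall>v1 v2 es1 es2. is_path Gr v1 v2 es1 \<longrightarrow> is_path Gr v1 v2 es2 \<longrightarrow>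
      path_word Gr es1 = path_word Gr es2 \<longrightarrow> es1 = es2)"

definition constrained_system :: "('v, 'e, 'a) lgraph \<Rightarrow> 'a list set" where
  "constrained_system Gr = {path_word Gr es | es. \<exists>v1 v2. is_path Gr v1 v2 es}"

definition capacity :: "'a list set \<Rightarrow> ereal" where
  "capacity S = limsup (\<lambda>n. let c = card {w \<in> S. length w = n} in
       if c = 0 then -\<infinity> else ereal (log 2 (real c) / real n))"

text \<open>The ordinary graph G' obtained by subdividing every edge of label length m
into a path of m edges through m-1 new auxiliary vertices (Inr (e,j), 1 \<le> j < m).\<close>
definition expand :: "('v, 'e, 'a) lgraph \<Rightarrow> ('v + ('e \<times> nat), 'e \<times> nat, 'a) lgraph" where
  "expand Gr = \<lparr>
     verts = Inl ` verts Gr \<union> {Inr (e, j) | e j. e \<in> edges Gr \<and> 1 \<le> j \<and> j < length (lab Gr e)},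
     edges = {(e, j) | e j. e \<in> edges Gr \<and> j < length (lab Gr e)},
     src = (\<lambda>(e, j). if j = 0 then Inl (src Gr e) else Inr (e, j)),
     tgt = (\<lambda>(e, j). if Suc j = length (lab Gr e) then Inl (tgt Gr e) else Inr (e, Suc j)),
     lab = (\<lambda>(e, j). [lab Gr e ! j]) \<rparr>"

definition adj_mat :: "('v, 'e, 'a) lgraph \<Rightarrow> 'v list \<Rightarrow> complex mat" where
  "adj_mat Gr vs = mat (length vs) (length vs)
     (\<lambda>(i, j). of_nat (card {e \<in> edges Gr. src Gr e = vs ! i \<and> tgt Gr e = vs ! j}))"

text \<open>Spectral radius of the adjacency matrix (independent of the enumeration).\<close>
definition graph_spectral_radius :: "('v, 'e, 'a) lgraph \<Rightarrow> real" where
  "graph_spectral_radius Gr =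
     spectral_radius (adj_mat Gr (SOME vs. distinct vs \<and> set vs = verts Gr))"

definition dna_graph :: "nat \<Rightarrow> (dna \<Rightarrow> dna \<Rightarrow> nat \<Rightarrow> nat) \<Rightarrow> (dna, dna \<times> dna \<times> nat, dna) lgraph" where
  "dna_graph l t = \<lparr>
     verts = UNIV,
     edges = {(b, a, i) | b a i. a \<noteq> b \<and> 1 \<le> i \<and> i \<le> l},
     src = (\<lambda>(b, a, i). b),
     tgt = (\<lambda>(b, a, i). a),
     lab = (\<lambda>(b, a, i). replicate (t b a i) a) \<rparr>"

end

theory Submission
  imports Defs
begin


lemma smult_pow_mat:
  assumes X: "X \<in> carrier_mat n n"
  shows "(c \<cdot>\<^sub>m X) ^\<^sub>m k = (c ^ k) \<cdot>\<^sub>m (X ^\<^sub>m k :: 'a::comm_ring_1 mat)"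
proof (induction k)
  case 0 then show ?case using X by (auto intro!: eq_matI)
next
  case (Suc k)
  have "(c \<cdot>\<^sub>m X) ^\<^sub>m Suc k = (c ^ k \<cdot>\<^sub>m X ^\<^sub>m k) * (c \<cdot>\<^sub>m X)" using Suc by simp
  also have "\<dots> = c ^ k \<cdot>\<^sub>m (X ^\<^sub>m k * (c \<cdot>\<^sub>m X))"
    using X by (intro mult_smult_assoc_mat) auto
  also have "X ^\<^sub>m k * (c \<cdot>\<^sub>m X) = c \<cdot>\<^sub>m (X ^\<^sub>m k * X)"
    using X by (intro mult_smult_distrib) auto
  finally show ?case by (auto intro!: eq_matI simp: algebra_simps)
qed

lemma smult_mat_vec:
  assumes X: "X \<in> carrier_mat n n" and v: "v \<in> carrier_vec n"
  shows "(c \<cdot>\<^sub>m X) *\<^sub>v v = c \<cdot>\<^sub>v (X *\<^sub>v (v :: 'a::comm_ring_1 vec))"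
  using X v by (intro eq_vecI) (auto simp: scalar_prod_def sum_distrib_left algebra_simps)

lemma M1:
  assumes X: "(X :: complex mat) \<in> carrier_mat n n" and n: "n > 0"
    and r: "r > spectral_radius X"
  shows "\<exists>c. \<forall>k i j. i < n \<longrightarrow> j < n \<longrightarrow> norm ((X ^\<^sub>m k) $$ (i,j)) \<le> c * r ^ k"
proof -
  have r0: "r > 0"
    using spectral_radius_mem_max(1)[OF X n] r by (auto intro: le_less_trans[OF norm_ge_zero])
  define B where "B = complex_of_real (1 / r) \<cdot>\<^sub>m X"
  have B: "B \<in> carrier_mat n n" using X by (simp add: B_def)
  have "spectral_radius B \<in> norm ` spectrum B" by (rule spectral_radius_mem_max(1)[OF B n])
  then obtain mu where mu: "mu \<in> spectrum B" and srB: "spectral_radius B = norm mu" by auto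
  from mu obtain v where ev: "eigenvector B v mu" unfolding spectrum_def eigenvalue_def by auto
  have v: "v \<in> carrier_vec n" "v \<noteq> 0\<^sub>v n" "B *\<^sub>v v = mu \<cdot>\<^sub>v v"
    using ev B unfolding eigenvector_def by auto
  have "X = complex_of_real r \<cdot>\<^sub>m B" using X r0 unfolding B_def by (auto intro!: eq_matI)
  hence "X *\<^sub>v v = (complex_of_real r * mu) \<cdot>\<^sub>v v"
    using smult_mat_vec[OF B v(1)] v by (simp add: smult_smult_assoc)
  hence "eigenvector X v (complex_of_real r * mu)" using v X unfolding eigenvector_def by auto
  hence "complex_of_real r * mu \<in> spectrum X" unfolding spectrum_def eigenvalue_def by auto
  hence "norm (complex_of_real r * mu) \<le> spectral_radius X"
    using spectral_radius_mem_max(2)[OF X n] by auto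
  hence "r * norm mu \<le> spectral_radius X" using r0 by (simp add: norm_mult)
  hence "r * norm mu < r * 1" using r by simp
  hence "norm mu < 1" using r0 mult_less_cancel_left_pos by blast
  hence "spectral_radius B < 1" using srB by simp
  from spectral_radius_jnf_norm_bound_less_1_upper_triangular[OF B this]
  obtain c where c: "\<And>k. norm_bound (B ^\<^sub>m k) c" by auto
  show ?thesis
  proof (intro exI allI impI)
    fix k i j assume ij: "i < n" "j < n"
    have "(X ^\<^sub>m k) = complex_of_real r ^ k \<cdot>\<^sub>m (B ^\<^sub>m k)"
      using \<open>X = _\<close> smult_pow_mat[OF B] by simp
    hence "(X ^\<^sub>m k) $$ (i,j) = complex_of_real r ^ k * (B ^\<^sub>m k) $$ (i,j)"
      using ij B by simp
    hence "norm ((X ^\<^sub>m k) $$ (i,j)) = r ^ k * norm ((B ^\<^sub>m k) $$ (i,j))"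
      using r0 by (simp add: norm_mult norm_power)
    also have "\<dots> \<le> r ^ k * c" using c[of k] ij B r0 unfolding norm_bound_def
      by (intro mult_left_mono) auto
    finally show "norm ((X ^\<^sub>m k) $$ (i,j)) \<le> c * r ^ k" by (simp add: mult.commute)
  qed
qed

lemma M2:
  assumes X: "(X :: complex mat) \<in> carrier_mat n n" and n: "n > 0"
  shows "\<exists>i<n. \<forall>k. spectral_radius X ^ k \<le> (\<Sum>j<n. norm ((X ^\<^sub>m k) $$ (i,j)))"
proof -
  obtain lam where lam: "lam \<in> spectrum X" and sr: "spectral_radius X = norm lam"
    using spectral_radius_mem_max(1)[OF X n] by auto
  from lam obtain v where ev: "eigenvector X v lam" unfolding spectrum_def eigenvalue_def by auto
  have v: "v \<in> carrier_vec n" "v \<noteq> 0\<^sub>v n" using ev X unfolding eigenvector_def by auto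
  obtain i where i: "i < n" "\<And>j. j < n \<Longrightarrow> norm (v $ j) \<le> norm (v $ i)"
  proof -
    have "finite ((\<lambda>j. norm (v $ j)) ` {..<n})" "(\<lambda>j. norm (v $ j)) ` {..<n} \<noteq> {}" using n by auto
    from Max_in[OF this] obtain i where "i < n" "norm (v $ i) = Max ((\<lambda>j. norm (v $ j)) ` {..<n})" by auto
    thus ?thesis using that by auto
  qed
  have vi: "norm (v $ i) > 0"
  proof (rule ccontr)
    assume "\<not> ?thesis"
    hence "\<And>j. j < n \<Longrightarrow> v $ j = 0" using i(2) by (meson norm_le_zero_iff not_less order_trans)
    hence "v = 0\<^sub>v n" using v(1) by (intro eq_vecI) auto
    thus False using v(2) by simp
  qed
  show ?thesis
  proof (intro exI[of _ i] conjI allI i(1))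
    fix k
    have eq: "X ^\<^sub>m k *\<^sub>v v = lam ^ k \<cdot>\<^sub>v v" by (rule eigenvector_pow[OF X ev])
    have "(X ^\<^sub>m k *\<^sub>v v) $ i = (\<Sum>j<n. (X ^\<^sub>m k) $$ (i,j) * v $ j)"
      using X v i(1) by (simp add: scalar_prod_def lessThan_atLeast0)
    hence "lam ^ k * v $ i = (\<Sum>j<n. (X ^\<^sub>m k) $$ (i,j) * v $ j)" using eq v i(1) by simp
    hence "norm lam ^ k * norm (v $ i) = norm (\<Sum>j<n. (X ^\<^sub>m k) $$ (i,j) * v $ j)"
      by (metis norm_mult norm_power)
    also have "\<dots> \<le> (\<Sum>j<n. norm ((X ^\<^sub>m k) $$ (i,j)) * norm (v $ j))"
      by (rule order_trans[OF norm_sum]) (simp add: norm_mult)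
    also have "\<dots> \<le> (\<Sum>j<n. norm ((X ^\<^sub>m k) $$ (i,j)) * norm (v $ i))"
      by (intro sum_mono mult_left_mono i(2)) auto
    also have "\<dots> = (\<Sum>j<n. norm ((X ^\<^sub>m k) $$ (i,j))) * norm (v $ i)"
      by (simp add: sum_distrib_right)
    finally show "spectral_radius X ^ k \<le> (\<Sum>j<n. norm ((X ^\<^sub>m k) $$ (i,j)))"
      using vi sr by simp
  qed
qed



lemma is_path_Nil[simp]: "is_path Gr u v [] \<longleftrightarrow> u \<in> verts Gr \<and> u = v"
  unfolding is_path_def by auto

lemma is_path_Cons:
  assumes wf: "wf_lgraph Gr"
  shows "is_path Gr u v (e # es) \<longleftrightarrow> e \<in> edges Gr \<and> src Gr e = u \<and> is_path Gr (tgt Gr e) v es"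
proof
  assume p: "is_path Gr u v (e # es)"
  hence e: "e \<in> edges Gr" "src Gr e = u" unfolding is_path_def by auto
  have tv: "tgt Gr e \<in> verts Gr" using wf e unfolding wf_lgraph_def by auto
  show "e \<in> edges Gr \<and> src Gr e = u \<and> is_path Gr (tgt Gr e) v es"
  proof (cases es)
    case Nil then show ?thesis using p e tv unfolding is_path_def by auto
  next
    case (Cons e' es')
    have "tgt Gr e = src Gr e'" using p Cons unfolding is_path_def by (metis length_Cons nth_Cons_0 nth_Cons_Suc zero_less_Suc Suc_less_eq list.simps(3))
    moreover have "\<forall>i. Suc i < length es \<longrightarrow> tgt Gr (es ! i) = src Gr (es ! Suc i)"
    proof (intro allI impI)
      fix i assume "Suc i < length es"
      moreover from p have "\<forall>i<length es. tgt Gr ((e # es) ! i) = src Gr (es ! i)"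
        unfolding is_path_def by simp
      ultimately have "tgt Gr ((e#es) ! Suc i) = src Gr (es ! Suc i)" by blast
      thus "tgt Gr (es ! i) = src Gr (es ! Suc i)" by simp
    qed
    ultimately show ?thesis using p e tv Cons unfolding is_path_def by auto
  qed
next
  assume h: "e \<in> edges Gr \<and> src Gr e = u \<and> is_path Gr (tgt Gr e) v es"
  have uv: "u \<in> verts Gr" using wf h unfolding wf_lgraph_def by auto
  show "is_path Gr u v (e # es)"
  proof (cases es)
    case Nil then show ?thesis using h uv unfolding is_path_def by auto
  next
    case (Cons e' es')
    have "\<forall>i. Suc i < length (e # es) \<longrightarrow> tgt Gr ((e # es) ! i) = src Gr ((e # es) ! Suc i)"
    proof (intro allI impI)
      fix i assume i: "Suc i < length (e # es)"
      show "tgt Gr ((e # es) ! i) = src Gr ((e # es) ! Suc i)"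
      proof (cases i)
        case 0 then show ?thesis using h Cons unfolding is_path_def by auto
      next
        case (Suc i') then show ?thesis using h Cons i unfolding is_path_def by auto
      qed
    qed
    then show ?thesis using h uv Cons unfolding is_path_def by auto
  qed
qed

lemma is_path_append:
  assumes wf: "wf_lgraph Gr"
  shows "is_path Gr u v (xs @ ys) \<longleftrightarrow> (\<exists>w. is_path Gr u w xs \<and> is_path Gr w v ys)"
proof (induction xs arbitrary: u)
  case Nil
  then show ?case
    by (cases ys) (auto simp: is_path_Cons[OF wf] wf[unfolded wf_lgraph_def])
next
  case (Cons x xs)
  then show ?case by (auto simp: is_path_Cons[OF wf])
qed

lemma is_path_verts: "is_path Gr u v es \<Longrightarrow> u \<in> verts Gr \<and> v \<in> verts Gr"
  unfolding is_path_def by auto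

lemma path_word_Nil[simp]: "path_word Gr [] = []"
  and path_word_Cons[simp]: "path_word Gr (e # es) = lab Gr e @ path_word Gr es"
  and path_word_append[simp]: "path_word Gr (xs @ ys) = path_word Gr xs @ path_word Gr ys"
  unfolding path_word_def by auto



lemma wf_expand:
  assumes wf: "wf_lgraph Gr" shows "wf_lgraph (expand Gr)"
proof -
  have fe: "finite (edges Gr)" and fv: "finite (verts Gr)" using wf unfolding wf_lgraph_def by auto
  have "{(e, j) | e j. e \<in> edges Gr \<and> j < length (lab Gr e)} = Sigma (edges Gr) (\<lambda>e. {..<length (lab Gr e)})" by auto
  hence f1: "finite {(e, j) | e j. e \<in> edges Gr \<and> j < length (lab Gr e)}" using fe by auto
  have "{Inr (e, j) | e j. e \<in> edges Gr \<and> 1 \<le> j \<and> j < length (lab Gr e)} \<subseteq> Inr ` {(e, j) | e j. e \<in> edges Gr \<and> j < length (lab Gr e)}" by auto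
  hence f2: "finite {Inr (e, j) | e j. e \<in> edges Gr \<and> 1 \<le> j \<and> j < length (lab Gr e)}"
    using f1 finite_subset by blast
  show ?thesis unfolding wf_lgraph_def expand_def using fv f1 f2 wf[unfolded wf_lgraph_def]
    by auto
qed

definition node :: "('v, 'e, 'a) lgraph \<Rightarrow> 'e \<Rightarrow> nat \<Rightarrow> 'v + 'e \<times> nat" where
  "node Gr e j = (if j = 0 then Inl (src Gr e) else if j = length (lab Gr e) then Inl (tgt Gr e) else Inr (e, j))"

definition xedge :: "('v, 'e, 'a) lgraph \<Rightarrow> 'e \<Rightarrow> ('e \<times> nat) list" where
  "xedge Gr e = map (Pair e) [0..<length (lab Gr e)]"

definition xpath :: "('v, 'e, 'a) lgraph \<Rightarrow> 'e list \<Rightarrow> ('e \<times> nat) list" where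
  "xpath Gr es = concat (map (xedge Gr) es)"

lemma path_word_expand: "path_word (expand Gr) p = map (\<lambda>(e, j). lab Gr e ! j) p"
  unfolding path_word_def expand_def by (induction p) auto

lemma length_path_word_expand[simp]: "length (path_word (expand Gr) p) = length p"
  by (simp add: path_word_expand)

lemma node_verts:
  assumes wf: "wf_lgraph Gr" and e: "e \<in> edges Gr" and j: "j \<le> length (lab Gr e)"
  shows "node Gr e j \<in> verts (expand Gr)"
  using wf e j unfolding node_def expand_def wf_lgraph_def by auto

lemma seg_path:
  assumes wf: "wf_lgraph Gr" and e: "e \<in> edges Gr"
  shows "j \<le> k \<Longrightarrow> k \<le> length (lab Gr e) \<Longrightarrow> is_path (expand Gr) (node Gr e j) (node Gr e k) (map (Pair e) [j..<k])"
proof (induction k)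
  case 0
  then show ?case using node_verts[OF wf e] by simp
next
  case (Suc k)
  show ?case
  proof (cases "j = Suc k")
    case True then show ?thesis using node_verts[OF wf e] Suc by simp
  next
    case False
    hence jk: "j \<le> k" using Suc by simp
    have IH: "is_path (expand Gr) (node Gr e j) (node Gr e k) (map (Pair e) [j..<k])"
      using Suc jk by simp
    have ed: "is_path (expand Gr) (node Gr e k) (node Gr e (Suc k)) [(e, k)]"
      using Suc e node_verts[OF wf e, of "Suc k"] wf[unfolded wf_lgraph_def]
      by (simp add: is_path_Cons[OF wf_expand[OF wf]]) (auto simp: expand_def node_def)
    show ?thesis using IH ed jk by (auto simp: is_path_append[OF wf_expand[OF wf]])
  qed
qed

lemma lab_len: "wf_lgraph Gr \<Longrightarrow> e \<in> edges Gr \<Longrightarrow> length (lab Gr e) \<ge> 1"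
  unfolding wf_lgraph_def by (auto simp: Suc_le_eq)

lemma xedge_path:
  assumes wf: "wf_lgraph Gr" and e: "e \<in> edges Gr"
  shows "is_path (expand Gr) (Inl (src Gr e)) (Inl (tgt Gr e)) (xedge Gr e)"
    "path_word (expand Gr) (xedge Gr e) = lab Gr e"
proof -
  have "node Gr e 0 = Inl (src Gr e)" "node Gr e (length (lab Gr e)) = Inl (tgt Gr e)"
    using lab_len[OF wf e] unfolding node_def by auto
  thus "is_path (expand Gr) (Inl (src Gr e)) (Inl (tgt Gr e)) (xedge Gr e)"
    using seg_path[OF wf e, of 0 "length (lab Gr e)"] unfolding xedge_def by simp
  show "path_word (expand Gr) (xedge Gr e) = lab Gr e"
    unfolding xedge_def path_word_expand by (simp add: map_nth comp_def)
qed

lemma xpath_path: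
  assumes wf: "wf_lgraph Gr"
  shows "is_path Gr u v es \<Longrightarrow> is_path (expand Gr) (Inl u) (Inl v) (xpath Gr es) \<and>
           path_word (expand Gr) (xpath Gr es) = path_word Gr es"
proof (induction es arbitrary: u)
  case Nil
  then show ?case unfolding xpath_def by (auto simp: expand_def)
next
  case (Cons e es)
  hence e: "e \<in> edges Gr" "src Gr e = u" "is_path Gr (tgt Gr e) v es"
    by (auto simp: is_path_Cons[OF wf])
  have "xpath Gr (e # es) = xedge Gr e @ xpath Gr es" unfolding xpath_def by simp
  then show ?case using Cons.IH[OF e(3)] xedge_path[OF wf e(1)] e
    by (auto simp: is_path_append[OF wf_expand[OF wf]])
qed

lemma X:
  assumes wf: "wf_lgraph Gr" and e: "e \<in> edges Gr"
  shows "j < length (lab Gr e) \<Longrightarrow> is_path (expand Gr) x (Inl v) ((e, j) # q) \<Longrightarrow>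
    \<exists>q'. (e, j) # q = map (Pair e) [j..<length (lab Gr e)] @ q' \<and> is_path (expand Gr) (Inl (tgt Gr e)) (Inl v) q'"
proof (induction q arbitrary: j x)
  case Nil
  hence "tgt (expand Gr) (e, j) = Inl v" "Inl v \<in> verts (expand Gr)"
    by (auto simp: is_path_Cons[OF wf_expand[OF wf]])
  hence "Suc j = length (lab Gr e)" "tgt Gr e = v" by (auto simp: expand_def split: if_splits)
  then show ?case using \<open>Inl v \<in> _\<close> by (intro exI[of _ "[]"]) (simp add: upt_conv_Cons)
next
  case (Cons y q)
  obtain e' j' where y: "y = (e', j')" by force
  have p: "is_path (expand Gr) (tgt (expand Gr) (e, j)) (Inl v) (y # q)"
    using Cons.prems by (simp add: is_path_Cons[OF wf_expand[OF wf]])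
  show ?case
  proof (cases "Suc j = length (lab Gr e)")
    case True
    hence "tgt (expand Gr) (e, j) = Inl (tgt Gr e)" by (simp add: expand_def)
    then show ?thesis using p True by (intro exI[of _ "y # q"]) (simp add: upt_conv_Cons)
  next
    case False
    hence t: "tgt (expand Gr) (e, j) = Inr (e, Suc j)" by (simp add: expand_def)
    hence "src (expand Gr) y = Inr (e, Suc j)" using p by (simp add: is_path_Cons[OF wf_expand[OF wf]])
    hence yv: "y = (e, Suc j)" using y by (simp add: expand_def split: if_splits)
    moreover have "Suc j < length (lab Gr e)" using False Cons.prems by simp
    ultimately obtain q' where "(e, Suc j) # q = map (Pair e) [Suc j..<length (lab Gr e)] @ q'"
      "is_path (expand Gr) (Inl (tgt Gr e)) (Inl v) q'"
      using Cons.IH[of "Suc j"] p t by blast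
    then show ?thesis using yv Cons.prems(1) by (intro exI[of _ q']) (simp add: upt_conv_Cons)
  qed
qed

lemma contract:
  assumes wf: "wf_lgraph Gr"
  shows "is_path (expand Gr) (Inl u) (Inl v) p \<Longrightarrow> \<exists>es. is_path Gr u v es \<and> p = xpath Gr es"
proof (induction "length p" arbitrary: p u rule: less_induct)
  case less
  show ?case
  proof (cases p)
    case Nil
    then show ?thesis using less.prems by (intro exI[of _ "[]"]) (auto simp: xpath_def expand_def)
  next
    case (Cons y q)
    obtain e j where y: "y = (e, j)" by force
    have yy: "y \<in> edges (expand Gr)" "src (expand Gr) y = Inl u"
      using less.prems Cons by (auto simp: is_path_Cons[OF wf_expand[OF wf]])
    hence ej: "e \<in> edges Gr" "j < length (lab Gr e)" "j = 0" "src Gr e = u"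
      using y by (auto simp: expand_def split: if_splits)
    from X[OF wf ej(1) ej(2)] less.prems Cons y ej(3)
    obtain q' where q': "p = xedge Gr e @ q'" "is_path (expand Gr) (Inl (tgt Gr e)) (Inl v) q'"
      unfolding xedge_def by blast
    have "length q' < length p" using q' lab_len[OF wf ej(1)] unfolding xedge_def by (simp add: Suc_le_eq)
    from less.hyps[OF this q'(2)] obtain es where "is_path Gr (tgt Gr e) v es" "q' = xpath Gr es" by blast
    then show ?thesis using q' ej
      by (intro exI[of _ "e # es"]) (auto simp: is_path_Cons[OF wf] xpath_def)
  qed
qed



definition paths :: "('v, 'e, 'a) lgraph \<Rightarrow> nat \<Rightarrow> 'v \<Rightarrow> 'v \<Rightarrow> 'e list set" where
  "paths Gr k u w = {p. is_path Gr u w p \<and> length p = k}"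

definition ecount :: "('v, 'e, 'a) lgraph \<Rightarrow> 'v \<Rightarrow> 'v \<Rightarrow> nat" where
  "ecount Gr v w = card {e \<in> edges Gr. src Gr e = v \<and> tgt Gr e = w}"

lemma finite_paths:
  assumes wf: "wf_lgraph Gr" shows "finite (paths Gr k u w)"
proof -
  have "paths Gr k u w \<subseteq> {xs. set xs \<subseteq> edges Gr \<and> length xs = k}"
    unfolding paths_def is_path_def by auto
  thus ?thesis using finite_lists_length_eq[of "edges Gr" k] wf[unfolded wf_lgraph_def]
    finite_subset by blast
qed

lemma paths_0: "paths Gr 0 u w = (if u \<in> verts Gr \<and> u = w then {[]} else {})"
  unfolding paths_def by auto

lemma paths_Suc:
  assumes wf: "wf_lgraph Gr"
  shows "paths Gr (Suc k) u w = (\<Union>v\<in>verts Gr. (\<lambda>(p, e). p @ [e]) ` (paths Gr k u v \<times> {e \<in> edges Gr. src Gr e = v \<and> tgt Gr e = w}))"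
proof (intro equalityI subsetI)
  fix p assume "p \<in> paths Gr (Suc k) u w"
  hence p: "is_path Gr u w p" "length p = Suc k" unfolding paths_def by auto
  then obtain xs x where pe: "p = xs @ [x]" by (metis length_Suc_conv_rev)
  then obtain v where "is_path Gr u v xs" "is_path Gr v w [x]" using p is_path_append[OF wf] by blast
  then show "p \<in> (\<Union>v\<in>verts Gr. (\<lambda>(p, e). p @ [e]) ` (paths Gr k u v \<times> {e \<in> edges Gr. src Gr e = v \<and> tgt Gr e = w}))"
    using pe p by (auto simp: paths_def is_path_Cons[OF wf] dest: is_path_verts intro!: bexI[of _ v] image_eqI[of _ _ "(xs, x)"])
next
  fix p assume "p \<in> (\<Union>v\<in>verts Gr. (\<lambda>(p, e). p @ [e]) ` (paths Gr k u v \<times> {e \<in> edges Gr. src Gr e = v \<and> tgt Gr e = w}))"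
  then obtain v xs x where "p = xs @ [x]" "is_path Gr u v xs" "length xs = k" "x \<in> edges Gr" "src Gr x = v" "tgt Gr x = w"
    unfolding paths_def by auto
  moreover have "w \<in> verts Gr" using wf calculation unfolding wf_lgraph_def by auto
  ultimately show "p \<in> paths Gr (Suc k) u w"
    unfolding paths_def by (auto simp: is_path_append[OF wf] is_path_Cons[OF wf])
qed

lemma card_paths_Suc:
  assumes wf: "wf_lgraph Gr"
  shows "card (paths Gr (Suc k) u w) = (\<Sum>v\<in>verts Gr. card (paths Gr k u v) * ecount Gr v w)"
proof -
  have fv: "finite (verts Gr)" and fe: "finite (edges Gr)" using wf unfolding wf_lgraph_def by auto
  have "card (paths Gr (Suc k) u w) = (\<Sum>v\<in>verts Gr. card ((\<lambda>(p, e). p @ [e]) ` (paths Gr k u v \<times> {e \<in> edges Gr. src Gr e = v \<and> tgt Gr e = w})))"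
    unfolding paths_Suc[OF wf]
  proof (rule card_UN_disjoint[OF fv])
    show "\<forall>v\<in>verts Gr. finite ((\<lambda>(p, e). p @ [e]) ` (paths Gr k u v \<times> {e \<in> edges Gr. src Gr e = v \<and> tgt Gr e = w}))"
      using finite_paths[OF wf] fe by auto
    show "\<forall>i\<in>verts Gr. \<forall>j\<in>verts Gr. i \<noteq> j \<longrightarrow>
      (\<lambda>(p, e). p @ [e]) ` (paths Gr k u i \<times> {e \<in> edges Gr. src Gr e = i \<and> tgt Gr e = w}) \<inter>
      (\<lambda>(p, e). p @ [e]) ` (paths Gr k u j \<times> {e \<in> edges Gr. src Gr e = j \<and> tgt Gr e = w}) = {}"
      by auto
  qed
  also have "\<dots> = (\<Sum>v\<in>verts Gr. card (paths Gr k u v) * ecount Gr v w)"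
  proof (rule sum.cong[OF refl])
    fix v
    have "inj_on (\<lambda>(p, e). p @ [e]) (paths Gr k u v \<times> {e \<in> edges Gr. src Gr e = v \<and> tgt Gr e = w})"
      by (auto simp: inj_on_def)
    thus "card ((\<lambda>(p, e). p @ [e]) ` (paths Gr k u v \<times> {e \<in> edges Gr. src Gr e = v \<and> tgt Gr e = w})) = card (paths Gr k u v) * ecount Gr v w"
      by (simp add: card_image card_cartesian_product ecount_def)
  qed
  finally show ?thesis .
qed

lemma adj_pow:
  assumes wf: "wf_lgraph Gr" and vs: "distinct vs" "set vs = verts Gr"
  shows "i < length vs \<Longrightarrow> j < length vs \<Longrightarrow>
    (adj_mat Gr vs ^\<^sub>m k) $$ (i, j) = of_nat (card (paths Gr k (vs ! i) (vs ! j)))"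
proof (induction k arbitrary: j)
  case 0
  have "vs ! i \<in> verts Gr" using vs 0 by auto
  then show ?case using 0 vs by (simp add: adj_mat_def paths_0 nth_eq_iff_index_eq)
next
  case (Suc k)
  let ?X = "adj_mat Gr vs"
  have X: "?X \<in> carrier_mat (length vs) (length vs)" unfolding adj_mat_def by simp
  have "(?X ^\<^sub>m Suc k) $$ (i, j) = (\<Sum>m<length vs. (?X ^\<^sub>m k) $$ (i, m) * ?X $$ (m, j))"
    using Suc.prems X by (simp add: scalar_prod_def lessThan_atLeast0)
  also have "\<dots> = (\<Sum>m<length vs. of_nat (card (paths Gr k (vs ! i) (vs ! m)) * ecount Gr (vs ! m) (vs ! j)))"
    using Suc by (intro sum.cong) (auto simp: adj_mat_def ecount_def)
  also have "\<dots> = of_nat (\<Sum>v\<in>set vs. card (paths Gr k (vs ! i) v) * ecount Gr v (vs ! j))"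
    by (subst sum.reindex_bij_betw[OF bij_betw_nth[OF vs(1) refl refl], symmetric]) simp
  also have "\<dots> = of_nat (card (paths Gr (Suc k) (vs ! i) (vs ! j)))"
    using card_paths_Suc[OF wf] vs by simp
  finally show ?case .
qed



definition wcount :: "('v, 'e, 'a) lgraph \<Rightarrow> nat \<Rightarrow> nat" where
  "wcount Gr n = card {w \<in> constrained_system Gr. length w = n}"

lemma finite_words:
  assumes wf: "wf_lgraph Gr" shows "finite {w \<in> constrained_system Gr. length w = n}"
proof -
  have "{w \<in> constrained_system Gr. length w = n} \<subseteq> {w. set w \<subseteq> (\<Union>e\<in>edges Gr. set (lab Gr e)) \<and> length w = n}"
    unfolding constrained_system_def path_word_def is_path_def by fastforce
  moreover have "finite (\<Union>e\<in>edges Gr. set (lab Gr e))" using wf unfolding wf_lgraph_def by auto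
  ultimately show ?thesis using finite_lists_length_eq finite_subset by blast
qed

lemma U1:
  assumes wf: "wf_lgraph Gr"
  shows "wcount Gr n \<le> (\<Sum>u\<in>verts (expand Gr). \<Sum>w\<in>verts (expand Gr). card (paths (expand Gr) n u w))"
proof -
  let ?V = "verts (expand Gr)"
  have wf': "wf_lgraph (expand Gr)" by (rule wf_expand[OF wf])
  have fV: "finite ?V" using wf' unfolding wf_lgraph_def by auto
  have sub: "{w \<in> constrained_system Gr. length w = n} \<subseteq> path_word (expand Gr) ` (\<Union>u\<in>?V. \<Union>w\<in>?V. paths (expand Gr) n u w)"
  proof
    fix w assume "w \<in> {w \<in> constrained_system Gr. length w = n}"
    then obtain es v1 v2 where es: "w = path_word Gr es" "is_path Gr v1 v2 es" "length w = n"
      unfolding constrained_system_def by auto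
    from xpath_path[OF wf es(2)] have "is_path (expand Gr) (Inl v1) (Inl v2) (xpath Gr es)"
      "path_word (expand Gr) (xpath Gr es) = w" using es by auto
    moreover have "length (xpath Gr es) = n" using calculation(2) es(3) length_path_word_expand by metis
    ultimately show "w \<in> path_word (expand Gr) ` (\<Union>u\<in>?V. \<Union>w\<in>?V. paths (expand Gr) n u w)"
      by (auto simp: paths_def dest: is_path_verts intro!: image_eqI[of _ _ "xpath Gr es"])
  qed
  have fin: "finite (\<Union>u\<in>?V. \<Union>w\<in>?V. paths (expand Gr) n u w)" using fV finite_paths[OF wf'] by auto
  have "wcount Gr n \<le> card (path_word (expand Gr) ` (\<Union>u\<in>?V. \<Union>w\<in>?V. paths (expand Gr) n u w))"
    unfolding wcount_def by (rule card_mono[OF finite_imageI[OF fin] sub])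
  also have "\<dots> \<le> card (\<Union>u\<in>?V. \<Union>w\<in>?V. paths (expand Gr) n u w)" by (rule card_image_le[OF fin])
  also have "\<dots> \<le> (\<Sum>u\<in>?V. card (\<Union>w\<in>?V. paths (expand Gr) n u w))" by (rule card_UN_le[OF fV])
  also have "\<dots> \<le> (\<Sum>u\<in>?V. \<Sum>w\<in>?V. card (paths (expand Gr) n u w))"
    by (intro sum_mono card_UN_le[OF fV])
  finally show ?thesis .
qed

lemma pre_ex:
  assumes wf: "wf_lgraph Gr" and M: "\<forall>e\<in>edges Gr. length (lab Gr e) \<le> M"
    and u: "u \<in> verts (expand Gr)"
  shows "\<exists>x q. is_path (expand Gr) (Inl x) u q \<and> length q \<le> M"
proof (cases u)
  case (Inl x)
  then show ?thesis using u by (intro exI[of _ x] exI[of _ "[]"]) auto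
next
  case (Inr ej)
  then obtain e j where ej: "u = Inr (e, j)" "e \<in> edges Gr" "1 \<le> j" "j < length (lab Gr e)"
    using u unfolding expand_def by auto
  have "node Gr e 0 = Inl (src Gr e)" "node Gr e j = u" using ej unfolding node_def by auto
  then show ?thesis using seg_path[OF wf ej(2), of 0 j] ej M
    by (intro exI[of _ "src Gr e"] exI[of _ "map (Pair e) [0..<j]"]) auto
qed

lemma suf_ex:
  assumes wf: "wf_lgraph Gr" and M: "\<forall>e\<in>edges Gr. length (lab Gr e) \<le> M"
    and u: "u \<in> verts (expand Gr)"
  shows "\<exists>x q. is_path (expand Gr) u (Inl x) q \<and> length q \<le> M"
proof (cases u)
  case (Inl x)
  then show ?thesis using u by (intro exI[of _ x] exI[of _ "[]"]) auto
next
  case (Inr ej)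
  then obtain e j where ej: "u = Inr (e, j)" "e \<in> edges Gr" "1 \<le> j" "j < length (lab Gr e)"
    using u unfolding expand_def by auto
  have "node Gr e (length (lab Gr e)) = Inl (tgt Gr e)" "node Gr e j = u" using ej unfolding node_def by auto
  then show ?thesis using seg_path[OF wf ej(2), of j "length (lab Gr e)"] ej M
    by (intro exI[of _ "tgt Gr e"] exI[of _ "map (Pair e) [j..<length (lab Gr e)]"]) auto
qed

lemma L1:
  assumes wf: "wf_lgraph Gr" and ll: "lossless Gr" and M: "\<forall>e\<in>edges Gr. length (lab Gr e) \<le> M"
    and u: "u \<in> verts (expand Gr)" and w: "w \<in> verts (expand Gr)"
  shows "\<exists>a b. a \<le> M \<and> b \<le> M \<and> card (paths (expand Gr) n u w) \<le> wcount Gr (n + a + b)"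
proof -
  have wf': "wf_lgraph (expand Gr)" by (rule wf_expand[OF wf])
  obtain x q1 where q1: "is_path (expand Gr) (Inl x) u q1" "length q1 \<le> M" using pre_ex[OF wf M u] by auto
  obtain y q2 where q2: "is_path (expand Gr) w (Inl y) q2" "length q2 \<le> M" using suf_ex[OF wf M w] by auto
  let ?L = "n + length q1 + length q2"
  have "card (paths (expand Gr) n u w) \<le> card (paths (expand Gr) ?L (Inl x) (Inl y))"
  proof (rule card_inj_on_le[of "\<lambda>p. q1 @ p @ q2"])
    show "inj_on (\<lambda>p. q1 @ p @ q2) (paths (expand Gr) n u w)" by (auto simp: inj_on_def)
    show "(\<lambda>p. q1 @ p @ q2) ` paths (expand Gr) n u w \<subseteq> paths (expand Gr) ?L (Inl x) (Inl y)"
    proof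
      fix z assume "z \<in> (\<lambda>p. q1 @ p @ q2) ` paths (expand Gr) n u w"
      then obtain p where p: "z = q1 @ p @ q2" "is_path (expand Gr) u w p" "length p = n"
        unfolding paths_def by auto
      have "is_path (expand Gr) u (Inl y) (p @ q2)" using p q2 is_path_append[OF wf'] by blast
      hence "is_path (expand Gr) (Inl x) (Inl y) (q1 @ p @ q2)" using q1 is_path_append[OF wf'] by blast
      thus "z \<in> paths (expand Gr) ?L (Inl x) (Inl y)" using p unfolding paths_def by simp
    qed
    show "finite (paths (expand Gr) ?L (Inl x) (Inl y))" by (rule finite_paths[OF wf'])
  qed
  also have "\<dots> \<le> wcount Gr ?L" unfolding wcount_def
  proof (rule card_inj_on_le[of "path_word (expand Gr)"])
    show "inj_on (path_word (expand Gr)) (paths (expand Gr) ?L (Inl x) (Inl y))"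
    proof (rule inj_onI)
      fix p1 p2 assume p: "p1 \<in> paths (expand Gr) ?L (Inl x) (Inl y)" "p2 \<in> paths (expand Gr) ?L (Inl x) (Inl y)"
        and eq: "path_word (expand Gr) p1 = path_word (expand Gr) p2"
      obtain es1 where e1: "is_path Gr x y es1" "p1 = xpath Gr es1" using contract[OF wf] p(1) unfolding paths_def by blast
      obtain es2 where e2: "is_path Gr x y es2" "p2 = xpath Gr es2" using contract[OF wf] p(2) unfolding paths_def by blast
      have "path_word Gr es1 = path_word Gr es2" using eq e1 e2 xpath_path[OF wf] by metis
      hence "es1 = es2" using ll e1 e2 unfolding lossless_def by blast
      thus "p1 = p2" using e1 e2 by simp
    qed
    show "path_word (expand Gr) ` paths (expand Gr) ?L (Inl x) (Inl y) \<subseteq> {w \<in> constrained_system Gr. length w = ?L}"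
    proof
      fix z assume "z \<in> path_word (expand Gr) ` paths (expand Gr) ?L (Inl x) (Inl y)"
      then obtain p where p: "z = path_word (expand Gr) p" "is_path (expand Gr) (Inl x) (Inl y) p" "length p = ?L"
        unfolding paths_def by auto
      obtain es where "is_path Gr x y es" "p = xpath Gr es" using contract[OF wf p(2)] by blast
      hence "z = path_word Gr es" "is_path Gr x y es" using p xpath_path[OF wf] by auto
      moreover have "length z = ?L" using p(1,3) by simp
      ultimately show "z \<in> {w \<in> constrained_system Gr. length w = ?L}" unfolding constrained_system_def by auto
    qed
    show "finite {w \<in> constrained_system Gr. length w = ?L}" by (rule finite_words[OF wf])
  qed
  finally show ?thesis using q1 q2 by blast
qed



lemma cap_general:
  assumes wf: "wf_lgraph Gr" and ll: "lossless Gr" and M: "\<forall>e\<in>edges Gr. length (lab Gr e) \<le> M"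
    and long: "\<And>K. \<exists>n\<ge>K. wcount Gr n \<ge> 1"
  shows "capacity (constrained_system Gr) = ereal (log 2 (graph_spectral_radius (expand Gr)))"
proof -
  let ?G = "expand Gr"
  let ?V = "verts ?G"
  have wf': "wf_lgraph ?G" by (rule wf_expand[OF wf])
  have fV: "finite ?V" using wf' unfolding wf_lgraph_def by auto
  define vs where "vs = (SOME vs. distinct vs \<and> set vs = ?V)"
  have "\<exists>vs. distinct vs \<and> set vs = ?V" using finite_distinct_list[OF fV] by auto
  hence vs: "distinct vs" "set vs = ?V" unfolding vs_def by (metis (mono_tags, lifting) someI_ex)+
  define N where "N = length vs"
  define X where "X = adj_mat ?G vs"
  define rho where "rho = graph_spectral_radius ?G"
  have rhoX: "rho = spectral_radius X" unfolding rho_def X_def graph_spectral_radius_def vs_def ..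
  have X: "X \<in> carrier_mat N N" unfolding X_def N_def adj_mat_def by simp
  have N: "N > 0"
  proof -
    obtain n where "wcount Gr n \<ge> 1" using long by blast
    hence "{w \<in> constrained_system Gr. length w = n} \<noteq> {}" unfolding wcount_def by (metis card.empty not_one_le_zero)
    then obtain es v1 v2 where "is_path Gr v1 v2 es" unfolding constrained_system_def by auto
    hence "Inl v1 \<in> ?V" using is_path_verts[of Gr] unfolding expand_def by auto
    thus ?thesis using vs unfolding N_def by (cases vs) auto
  qed
  have entry: "norm ((X ^\<^sub>m n) $$ (i, j)) = real (card (paths ?G n (vs ! i) (vs ! j)))"
    if "i < N" "j < N" for n i j
    using adj_pow[OF wf' vs, of i j n] that unfolding X_def N_def by simp
  have sumeq: "real (\<Sum>u\<in>?V. \<Sum>w\<in>?V. card (paths ?G n u w)) = (\<Sum>i<N. \<Sum>j<N. norm ((X ^\<^sub>m n) $$ (i, j)))" for n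
  proof -
    have "(\<Sum>u\<in>?V. \<Sum>w\<in>?V. card (paths ?G n u w)) = (\<Sum>i<N. \<Sum>j<N. card (paths ?G n (vs ! i) (vs ! j)))"
      unfolding vs(2)[symmetric] N_def
      by (subst sum.reindex_bij_betw[OF bij_betw_nth[OF vs(1) refl refl], symmetric],
          subst sum.reindex_bij_betw[OF bij_betw_nth[OF vs(1) refl refl], symmetric]) simp
    thus ?thesis by (simp add: entry)
  qed
  have UB: "\<exists>C. \<forall>n. real (wcount Gr n) \<le> C * r ^ n" if r: "r > rho" for r
  proof -
    obtain c where c: "\<And>k i j. i < N \<Longrightarrow> j < N \<Longrightarrow> norm ((X ^\<^sub>m k) $$ (i,j)) \<le> c * r ^ k"
      using M1[OF X N, of r] r rhoX by blast
    show ?thesis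
    proof (intro exI allI)
      fix n
      have "real (wcount Gr n) \<le> real (\<Sum>u\<in>?V. \<Sum>w\<in>?V. card (paths ?G n u w))"
        using U1[OF wf, of n] by linarith
      also have "\<dots> = (\<Sum>i<N. \<Sum>j<N. norm ((X ^\<^sub>m n) $$ (i, j)))" by (rule sumeq)
      also have "\<dots> \<le> (\<Sum>i<N. \<Sum>j<N. c * r ^ n)" by (intro sum_mono c) auto
      also have "\<dots> = (real N * real N * c) * r ^ n" by simp
      finally show "real (wcount Gr n) \<le> (real N * real N * c) * r ^ n" .
    qed
  qed
  have LB: "\<exists>k. n \<le> k \<and> k \<le> n + 2 * M \<and> rho ^ n \<le> real N * real (wcount Gr k)" for n
  proof -
    obtain i where i: "i < N" "\<And>k. spectral_radius X ^ k \<le> (\<Sum>j<N. norm ((X ^\<^sub>m k) $$ (i,j)))"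
      using M2[OF X N] by auto
    have "\<forall>j\<in>{..<N}. \<exists>k. n \<le> k \<and> k \<le> n + 2 * M \<and> real (card (paths ?G n (vs ! i) (vs ! j))) \<le> real (wcount Gr k)"
    proof
      fix j assume "j \<in> {..<N}"
      hence "vs ! i \<in> ?V" "vs ! j \<in> ?V" using i vs unfolding N_def by auto
      from L1[OF wf ll M this] obtain a b where "a \<le> M" "b \<le> M" "card (paths ?G n (vs ! i) (vs ! j)) \<le> wcount Gr (n + a + b)"
        by blast
      thus "\<exists>k. n \<le> k \<and> k \<le> n + 2 * M \<and> real (card (paths ?G n (vs ! i) (vs ! j))) \<le> real (wcount Gr k)"
        by (intro exI[of _ "n + a + b"]) auto
    qed
    then obtain kf where kf: "\<And>j. j < N \<Longrightarrow> n \<le> kf j \<and> kf j \<le> n + 2 * M \<and> real (card (paths ?G n (vs ! i) (vs ! j))) \<le> real (wcount Gr (kf j))"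
      by (metis lessThan_iff)
    show ?thesis
    proof (rule ccontr)
      assume "\<not> ?thesis"
      hence lt: "\<And>j. j < N \<Longrightarrow> real N * real (wcount Gr (kf j)) < rho ^ n" using kf by (meson not_le)
      have "rho ^ n \<le> (\<Sum>j<N. real (card (paths ?G n (vs ! i) (vs ! j))))"
        using i(2)[of n] rhoX entry i(1) by simp
      also have "\<dots> \<le> (\<Sum>j<N. real (wcount Gr (kf j)))" by (intro sum_mono) (use kf in auto)
      also have "\<dots> < (\<Sum>j<N. rho ^ n / real N)"
        using N lt by (intro sum_strict_mono) (auto simp: field_simps)
      also have "\<dots> = rho ^ n" using N by simp
      finally show False by simp
    qed
  qed
  have rho1: "rho \<ge> 1"
  proof (rule ccontr)
    assume "\<not> ?thesis"
    define r where "r = (1 + rho) / 2"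
    have r: "r > rho" "r < 1" using \<open>\<not> rho \<ge> 1\<close> unfolding r_def by auto
    have r0: "r > 0" using r rhoX spectral_radius_mem_max(1)[OF X N] by (auto intro: le_less_trans[OF norm_ge_zero])
    obtain C where C: "\<And>n. real (wcount Gr n) \<le> C * r ^ n" using UB[OF r(1)] by auto
    have "(\<lambda>n. C * r ^ n) \<longlonglongrightarrow> C * 0"
      by (intro tendsto_mult tendsto_const LIMSEQ_power_zero) (use r r0 in auto)
    hence "eventually (\<lambda>n. C * r ^ n < 1) sequentially" by (intro order_tendstoD) auto
    then obtain K where K: "\<And>n. n \<ge> K \<Longrightarrow> C * r ^ n < 1" unfolding eventually_sequentially by auto
    obtain n where "n \<ge> K" "wcount Gr n \<ge> 1" using long by blast
    thus False using K[of n] C[of n] by linarith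
  qed
  define L where "L = log 2 rho"
  have L0: "L \<ge> 0" unfolding L_def using rho1 by simp
  define f where "f = (\<lambda>n. let c = card {w \<in> constrained_system Gr. length w = n} in
       if c = 0 then -\<infinity> else ereal (log 2 (real c) / real n))"
  have cap: "capacity (constrained_system Gr) = limsup f" unfolding capacity_def f_def ..
  have f_eq: "f n = (if wcount Gr n = 0 then -\<infinity> else ereal (log 2 (real (wcount Gr n)) / real n))" for n
    unfolding f_def wcount_def Let_def ..
  have upper: "limsup f \<le> ereal L + ereal e" if e: "e > 0" for e
  proof -
    define r where "r = rho * 2 powr (e / 2)"
    have "2 powr 0 < 2 powr (e / 2)" using e by (intro powr_less_mono) auto
    hence "1 < 2 powr (e / 2)" by simp
    hence rr: "r > rho" unfolding r_def using rho1 by simp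
    have r0: "r > 0" using rr rho1 by simp
    have logr: "log 2 r = L + e / 2" unfolding r_def L_def using rho1 by (simp add: log_mult)
    obtain C where C: "\<And>n. real (wcount Gr n) \<le> C * r ^ n" using UB[OF rr] by auto
    define C' where "C' = max C 1"
    have C': "\<And>n. real (wcount Gr n) \<le> C' * r ^ n" "C' \<ge> 1"
      unfolding C'_def using C r0 by (auto intro: order_trans[OF C] mult_right_mono)
    have "(\<lambda>n. log 2 C' / real n) \<longlonglongrightarrow> 0" by (rule lim_const_over_n)
    hence "eventually (\<lambda>n. log 2 C' / real n < e / 2) sequentially" using e by (intro order_tendstoD) auto
    then obtain K where K: "\<And>n. n \<ge> K \<Longrightarrow> log 2 C' / real n < e / 2" unfolding eventually_sequentially by auto
    have "eventually (\<lambda>n. f n \<le> ereal (L + e)) sequentially"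
      unfolding eventually_sequentially
    proof (intro exI[of _ "max K 1"] allI impI)
      fix n assume n: "n \<ge> max K 1"
      show "f n \<le> ereal (L + e)"
      proof (cases "wcount Gr n = 0")
        case True then show ?thesis by (simp add: f_eq)
      next
        case False
        have "log 2 (real (wcount Gr n)) \<le> log 2 (C' * r ^ n)"
          using False C'(1)[of n] r0 C'(2) by (subst log_le_cancel_iff) auto
        also have "\<dots> = log 2 C' + n * log 2 r" using C'(2) r0 by (simp add: log_mult log_nat_power)
        finally have "log 2 (real (wcount Gr n)) / n \<le> log 2 C' / n + log 2 r"
          using n by (simp add: field_simps)
        also have "\<dots> \<le> L + e"
        proof -
          have "log 2 C' / real n < e / 2" using K[of n] n by simp
          thus ?thesis using logr by linarith
        qed
        finally show ?thesis using False by (simp add: f_eq)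
      qed
    qed
    hence "limsup f \<le> ereal (L + e)" by (rule Limsup_bounded)
    thus ?thesis by simp
  qed
  have lower: "ereal L \<le> limsup f + ereal e" if e: "e > 0" for e
  proof -
    define D where "D = 2 * real M * L + log 2 (real N)"
    have "ereal (L - e) \<le> limsup f"
      unfolding limsup_INF_SUP
    proof (rule INF_greatest)
      fix n0 :: nat
      define c where "c = nat \<lceil>D / e\<rceil>"
      define n where "n = max n0 (max c 1)"
      have "c \<le> n" unfolding n_def by simp
      hence "real c \<le> real n" by (simp only: of_nat_le_iff)
      hence n2: "real n \<ge> D / e" using real_nat_ceiling_ge[of "D / e"] unfolding c_def by linarith
      have n: "n \<ge> n0" "real n \<ge> D / e" "n \<ge> 1"
      proof -
        show "n \<ge> n0" unfolding n_def by simp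
        show "real n \<ge> D / e" by (rule n2)
        show "n \<ge> 1" unfolding n_def by simp
      qed
      obtain k where k: "n \<le> k" "k \<le> n + 2 * M" "rho ^ n \<le> real N * real (wcount Gr k)" using LB by blast
      have rpos: "rho ^ n > 0" using rho1 by simp
      hence wpos: "real (wcount Gr k) > 0" using k(3) by (cases "wcount Gr k = 0") auto
      have k1: "real k \<ge> 1" using n k by simp
      have "n * L - log 2 (real N) = log 2 (rho ^ n / real N)"
        using rho1 N by (simp add: log_divide log_nat_power L_def)
      also have "\<dots> \<le> log 2 (real (wcount Gr k))"
        using rpos N k(3) wpos by (subst log_le_cancel_iff) (auto simp: field_simps)
      finally have h1: "n * L - log 2 (real N) \<le> log 2 (real (wcount Gr k))" .
      have "real n \<ge> real k - 2 * real M" using k by linarith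
      hence "n * L \<ge> (real k - 2 * real M) * L" using L0 by (intro mult_right_mono) auto
      hence "real k * L - D \<le> log 2 (real (wcount Gr k))" using h1 unfolding D_def by (simp add: algebra_simps)
      moreover have "D \<le> real k * e"
      proof -
        have "D \<le> real n * e" using n(2) e by (simp add: field_simps)
        also have "\<dots> \<le> real k * e" using k(1) e by (intro mult_right_mono) auto
        finally show ?thesis .
      qed
      ultimately have "real k * (L - e) \<le> log 2 (real (wcount Gr k))" by (simp add: algebra_simps)
      hence "L - e \<le> log 2 (real (wcount Gr k)) / real k" using k1 by (simp add: field_simps)
      hence "ereal (L - e) \<le> f k" using wpos by (simp add: f_eq)
      thus "ereal (L - e) \<le> (SUP m\<in>{n0..}. f m)" using n k by (intro SUP_upper2[of k]) auto
    qed
    have "ereal L = ereal (L - e) + ereal e" by simp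
    also have "\<dots> \<le> limsup f + ereal e" by (rule add_right_mono) fact
    finally show ?thesis .
  qed
  have "limsup f = ereal L"
  proof (rule antisym)
    show "limsup f \<le> ereal L" by (rule ereal_le_epsilon2) (rule upper)
    show "ereal L \<le> limsup f" by (rule ereal_le_epsilon2) (rule lower)
  qed
  thus ?thesis using cap unfolding L_def rho_def by simp
qed



lemma UNIV_dna: "(UNIV :: dna set) = {A, C, G, T}"
  using dna.exhaust by auto

lemma finite_UNIV_dna: "finite (UNIV :: dna set)" by (simp add: UNIV_dna)

context
  fixes l M :: nat and t :: "dna \<Rightarrow> dna \<Rightarrow> nat \<Rightarrow> nat"
  assumes l1: "l \<ge> 1"
    and tb: "\<And>a b i. a \<noteq> b \<Longrightarrow> 1 \<le> i \<Longrightarrow> i \<le> l \<Longrightarrow> 1 \<le> t b a i \<and> t b a i \<le> M"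
    and tm: "\<And>a b i j. a \<noteq> b \<Longrightarrow> 1 \<le> i \<Longrightarrow> i < j \<Longrightarrow> j \<le> l \<Longrightarrow> t b a i < t b a j"
begin

lemma dna_edges: "e \<in> edges (dna_graph l t) \<longleftrightarrow> (\<exists>b a i. e = (b, a, i) \<and> a \<noteq> b \<and> 1 \<le> i \<and> i \<le> l)"
  unfolding dna_graph_def by auto

lemma wf_dna: "wf_lgraph (dna_graph l t)"
proof -
  have "edges (dna_graph l t) \<subseteq> UNIV \<times> UNIV \<times> {1..l}" unfolding dna_graph_def by auto
  hence "finite (edges (dna_graph l t))"
    using finite_UNIV_dna by (meson finite_SigmaI finite_atLeastAtMost finite_subset)
  moreover have "\<forall>e\<in>edges (dna_graph l t). lab (dna_graph l t) e \<noteq> []"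
    using tb unfolding dna_graph_def by fastforce
  ultimately show ?thesis unfolding wf_lgraph_def using finite_UNIV_dna by (simp add: dna_graph_def)
qed

lemma M_dna: "\<forall>e\<in>edges (dna_graph l t). length (lab (dna_graph l t) e) \<le> M"
  using tb unfolding dna_graph_def by fastforce

lemma hd_word:
  "is_path (dna_graph l t) v1 v2 es \<Longrightarrow> path_word (dna_graph l t) es = [] \<or> hd (path_word (dna_graph l t) es) \<noteq> v1"
proof (cases es)
  case (Cons e r)
  assume p: "is_path (dna_graph l t) v1 v2 es"
  then have "e \<in> edges (dna_graph l t)" "src (dna_graph l t) e = v1" using Cons by (auto simp: is_path_Cons[OF wf_dna])
  then obtain a i where "e = (v1, a, i)" "a \<noteq> v1" "1 \<le> i" "i \<le> l"
    unfolding dna_graph_def by auto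
  moreover have "t v1 a i \<ge> 1" using tb calculation by blast
  ultimately show ?thesis using Cons by (cases "t v1 a i") (auto simp: dna_graph_def)
qed simp

lemma takeWhile_rep:
  "w = [] \<or> hd w \<noteq> a \<Longrightarrow> takeWhile (\<lambda>x. x = a) (replicate n a @ w) = replicate n a"
  by (induction n) (cases w; auto)+

lemma t_inj: "a \<noteq> b \<Longrightarrow> 1 \<le> i \<Longrightarrow> i \<le> l \<Longrightarrow> 1 \<le> j \<Longrightarrow> j \<le> l \<Longrightarrow> t b a i = t b a j \<Longrightarrow> i = j"
  using tm by (metis less_irrefl nat_neq_iff)

lemma lossless_dna: "lossless (dna_graph l t)"
proof -
  let ?G = "dna_graph l t"
  have "\<And>v1 v2 v2' es2. is_path ?G v1 v2 es1 \<Longrightarrow> is_path ?G v1 v2' es2 \<Longrightarrow> path_word ?G es1 = path_word ?G es2 \<Longrightarrow> es1 = es2" for es1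
  proof (induction es1)
    case Nil
    then show ?case using wf_dna unfolding wf_lgraph_def
      by (cases es2) (auto simp: is_path_Cons[OF wf_dna])
  next
    case (Cons e1 r1)
    have p1: "e1 \<in> edges ?G" "src ?G e1 = v1" "is_path ?G (tgt ?G e1) v2 r1"
      using Cons.prems(1) by (auto simp: is_path_Cons[OF wf_dna])
    then obtain a1 i1 where e1: "e1 = (v1, a1, i1)" "a1 \<noteq> v1" "1 \<le> i1" "i1 \<le> l"
      unfolding dna_graph_def by auto
    have t1: "t v1 a1 i1 \<ge> 1" using tb e1 by blast
    show ?case
    proof (cases es2)
      case Nil
      then show ?thesis using Cons.prems(3) e1 t1 by (cases "t v1 a1 i1") (auto simp: dna_graph_def)
    next
      case (Cons e2 r2)
      have p2: "e2 \<in> edges ?G" "src ?G e2 = v1" "is_path ?G (tgt ?G e2) v2' r2"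
        using Cons.prems(2) Cons by (auto simp: is_path_Cons[OF wf_dna])
      then obtain a2 i2 where e2: "e2 = (v1, a2, i2)" "a2 \<noteq> v1" "1 \<le> i2" "i2 \<le> l"
        unfolding dna_graph_def by auto
      have t2: "t v1 a2 i2 \<ge> 1" using tb e2 by blast
      have w: "replicate (t v1 a1 i1) a1 @ path_word ?G r1 = replicate (t v1 a2 i2) a2 @ path_word ?G r2"
        using Cons.prems(3) Cons e1 e2 by (simp add: dna_graph_def)
      have "hd (replicate (t v1 a1 i1) a1 @ path_word ?G r1) = a1" using t1 by (cases "t v1 a1 i1") auto
      moreover have "hd (replicate (t v1 a2 i2) a2 @ path_word ?G r2) = a2" using t2 by (cases "t v1 a2 i2") auto
      ultimately have a: "a1 = a2" using w by simp
      have h1: "path_word ?G r1 = [] \<or> hd (path_word ?G r1) \<noteq> a1"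
        using hd_word[of _ v2 r1] p1(3) e1 by (simp add: dna_graph_def)
      have h2: "path_word ?G r2 = [] \<or> hd (path_word ?G r2) \<noteq> a1"
        using hd_word[of _ v2' r2] p2(3) e2 a by (simp add: dna_graph_def)
      have "replicate (t v1 a1 i1) a1 = replicate (t v1 a2 i2) a1"
        using takeWhile_rep[OF h1, of "t v1 a1 i1"] takeWhile_rep[OF h2, of "t v1 a2 i2"] w a by simp
      hence "t v1 a1 i1 = t v1 a1 i2" using a by simp
      hence i: "i1 = i2" using t_inj e1 e2 by blast
      hence "path_word ?G r1 = path_word ?G r2" using w a by simp
      moreover have "is_path ?G a1 v2 r1" "is_path ?G a1 v2' r2"
        using p1(3) p2(3) e1 e2 a by (auto simp: dna_graph_def)
      ultimately have "r1 = r2" using Cons.IH by blast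
      then show ?thesis using Cons e1 e2 a i by simp
    qed
  qed
  thus ?thesis unfolding lossless_def by blast
qed

lemma long_dna: "\<exists>n\<ge>K. wcount (dna_graph l t) n \<ge> 1"
proof -
  let ?G = "dna_graph l t"
  define e1 where "e1 = (A, C, 1::nat)"
  define e2 where "e2 = (C, A, 1::nat)"
  have e12: "e1 \<in> edges ?G" "e2 \<in> edges ?G" using l1 unfolding e1_def e2_def dna_graph_def by auto
  have lab1: "length (lab ?G e1) \<ge> 1" "length (lab ?G e2) \<ge> 1"
    using lab_len[OF wf_dna] e12 by auto
  have P: "is_path ?G A A (concat (replicate m [e1, e2])) \<and> length (path_word ?G (concat (replicate m [e1, e2]))) \<ge> m" for m
  proof (induction m)
    case 0 then show ?case by (simp add: dna_graph_def)
  next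
    case (Suc m)
    have "is_path ?G A A ([e1, e2] @ concat (replicate m [e1, e2]))"
      using Suc e12 by (simp add: is_path_Cons[OF wf_dna]) (simp add: e1_def e2_def dna_graph_def)
    moreover have "length (path_word ?G ([e1, e2] @ concat (replicate m [e1, e2]))) \<ge> Suc m"
      using Suc lab1 by simp
    ultimately show ?case by simp
  qed
  define w where "w = path_word ?G (concat (replicate K [e1, e2]))"
  have "w \<in> constrained_system ?G"
    using P[of K] unfolding w_def constrained_system_def by auto
  hence "w \<in> {x \<in> constrained_system ?G. length x = length w}" by simp
  hence "card {x \<in> constrained_system ?G. length x = length w} > 0"
    using finite_words[OF wf_dna, of "length w"] card_gt_0_iff by blast
  hence "card {x \<in> constrained_system ?G. length x = length w} \<ge> 1" by simp
  thus ?thesis using P[of K] unfolding wcount_def w_def by blast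
qed

end

theorem lemma1:
  fixes l M :: nat and t :: "dna \<Rightarrow> dna \<Rightarrow> nat \<Rightarrow> nat"
  assumes "l \<ge> 1" and "M \<ge> 1"
    and "\<And>a b i. a \<noteq> b \<Longrightarrow> 1 \<le> i \<Longrightarrow> i \<le> l \<Longrightarrow> 1 \<le> t b a i \<and> t b a i \<le> M"
    and "\<And>a b i j. a \<noteq> b \<Longrightarrow> 1 \<le> i \<Longrightarrow> i < j \<Longrightarrow> j \<le> l \<Longrightarrow> t b a i < t b a j"
  shows "lossless (dna_graph l t) \<and>
         capacity (constrained_system (dna_graph l t)) =
           ereal (log 2 (graph_spectral_radius (expand (dna_graph l t))))"
  using lossless_dna[OF assms(1,3,4)]
    cap_general[OF wf_dna[OF assms(1,3,4)] lossless_dna[OF assms(1,3,4)] M_dna[OF assms(1,3,4)] long_dna[OF assms(1,3,4)]]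
  by simp

end
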